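(* There is a semigroup which is not moving but in which the proper IP sets are partition regular (for every proper IP set $A$ and every partition of $A$ into finitely many pieces, some piece is a proper IP set).
   Context: Semigroups are written additively and are not assumed commutative. An infinite semigroup $S$ is moving if for each infinite $A\subseteq S$ and each finite $F\subseteq S$ there are $a_1,\dotsc,a_k\in A$ such that $\{a_1+s,\dotsc,a_k+s\}\not\subseteq F$ for all but finitely many $s\in S$. For a sequence $a_1,a_2,\dotsc$, $\mathrm{FS}(a_1,a_2,\dotsc):=\{a_{i_1}+\dotsb+a_{i_m}: m\ge1,\ i_1<\dotsb<i_m\}$; a proper IP set is a set containing $\mathrm{FS}(b_1,b_2,\dotsc)$ for some injective sequence $b_1,b_2,\dotsc$. *)

theory Defs
  imports Main "HOL-Library.Disjoint_Sets"
begin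

definition semigroup_on :: "'a set \<Rightarrow> ('a \<Rightarrow> 'a \<Rightarrow> 'a) \<Rightarrow> bool" where
  "semigroup_on S p \<longleftrightarrow> (\<forall>x\<in>S. \<forall>y\<in>S. p x y \<in> S) \<and>
     (\<forall>x\<in>S. \<forall>y\<in>S. \<forall>z\<in>S. p (p x y) z = p x (p y z))"

definition moving :: "'a set \<Rightarrow> ('a \<Rightarrow> 'a \<Rightarrow> 'a) \<Rightarrow> bool" where
  "moving S p \<longleftrightarrow> infinite S \<and>
     (\<forall>A F. A \<subseteq> S \<and> infinite A \<and> F \<subseteq> S \<and> finite F \<longrightarrow>
        (\<exists>as. set as \<subseteq> A \<and> finite {s\<in>S. (\<lambda>a. p a s) ` set as \<subseteq> F}))"

fun list_sum1 :: "('a \<Rightarrow> 'a \<Rightarrow> 'a) \<Rightarrow> 'a list \<Rightarrow> 'a" where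
  "list_sum1 p (x # xs) = foldl p x xs"

definition FS :: "('a \<Rightarrow> 'a \<Rightarrow> 'a) \<Rightarrow> (nat \<Rightarrow> 'a) \<Rightarrow> 'a set" where
  "FS p b = {list_sum1 p (map b (sorted_list_of_set I)) | I. finite I \<and> I \<noteq> {}}"

definition proper_IP :: "'a set \<Rightarrow> ('a \<Rightarrow> 'a \<Rightarrow> 'a) \<Rightarrow> 'a set \<Rightarrow> bool" where
  "proper_IP S p A \<longleftrightarrow> A \<subseteq> S \<and> (\<exists>b. (\<forall>n. b n \<in> S) \<and> inj b \<and> FS p b \<subseteq> A)"

definition proper_IP_partition_regular :: "'a set \<Rightarrow> ('a \<Rightarrow> 'a \<Rightarrow> 'a) \<Rightarrow> bool" where
  "proper_IP_partition_regular S p \<longleftrightarrow>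
     (\<forall>A P. proper_IP S p A \<and> finite P \<and> disjoint P \<and> \<Union>P = A \<longrightarrow>
        (\<exists>B\<in>P. proper_IP S p B))"

end

theory Submission
  imports Defs "HOL-Library.Infinite_Set"
begin

definition good :: "nat set \<Rightarrow> nat set \<Rightarrow> bool" where
  "good a b \<longleftrightarrow> a \<noteq> {} \<and> b \<noteq> {} \<and> (0 \<in> a \<longleftrightarrow> 0 \<in> b)"

definition pp :: "nat set \<Rightarrow> nat set \<Rightarrow> nat set" where
  "pp a b = (if good a b then a else {})"

lemma pp_semi: "semigroup_on UNIV pp"
  unfolding semigroup_on_def pp_def good_def by auto

lemma foldl_pp: "(\<forall>y\<in>set xs. good x y) \<Longrightarrow> foldl pp x xs = x"
  by (induction xs) (auto simp: pp_def)

lemma FS_sub: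
  assumes "\<And>i j. good (c i) (c j)"
  shows "FS pp c \<subseteq> range c"
proof
  fix x assume "x \<in> FS pp c"
  then obtain I where I: "finite I" "I \<noteq> {}" and x: "x = list_sum1 pp (map c (sorted_list_of_set I))"
    unfolding FS_def by blast
  obtain i "is" where "sorted_list_of_set I = i # is"
    using I by (cases "sorted_list_of_set I") auto
  then have "x = foldl pp (c i) (map c is)" using x by simp
  also have "\<dots> = c i" using assms by (intro foldl_pp) auto
  finally show "x \<in> range c" by simp
qed

lemma single_FS: "b n \<in> FS p b"
proof -
  have "sorted_list_of_set {n} = [n]" by simp
  then have "b n = list_sum1 p (map b (sorted_list_of_set {n}))" by simp
  then show ?thesis unfolding FS_def by blast
qed

lemma not_moving: "\<not> moving UNIV pp"
proof
  assume m: "moving UNIV pp"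
  have infA: "infinite {a :: nat set. 0 \<in> a}"
  proof -
    have "inj (\<lambda>n::nat. {0, Suc n})" by (auto simp: inj_def doubleton_eq_iff)
    then have "infinite (range (\<lambda>n::nat. {0, Suc n}))" by (rule range_inj_infinite)
    moreover have "range (\<lambda>n::nat. {0, Suc n}) \<subseteq> {a. 0 \<in> a}" by auto
    ultimately show ?thesis using finite_subset by blast
  qed
  obtain as where as: "set as \<subseteq> {a. 0 \<in> a}" and fin: "finite {s\<in>UNIV. (\<lambda>a. pp a s) ` set as \<subseteq> {{}}}"
  proof -
    have "\<forall>A F. A \<subseteq> (UNIV::nat set set) \<and> infinite A \<and> F \<subseteq> UNIV \<and> finite F \<longrightarrow>
        (\<exists>as. set as \<subseteq> A \<and> finite {s\<in>UNIV. (\<lambda>a. pp a s) ` set as \<subseteq> F})"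
      using m unfolding moving_def by (rule conjunct2)
    then have "\<exists>as. set as \<subseteq> {a. 0 \<in> a} \<and> finite {s\<in>UNIV. (\<lambda>a. pp a s) ` set as \<subseteq> {{}}}"
      using infA by simp
    then show ?thesis using that by blast
  qed
  have "range (\<lambda>n::nat. {Suc n}) \<subseteq> {s\<in>UNIV. (\<lambda>a. pp a s) ` set as \<subseteq> {{}}}"
    using as by (auto simp: pp_def good_def)
  moreover have "infinite (range (\<lambda>n::nat. {Suc n}))"
    by (rule range_inj_infinite) (auto simp: inj_def)
  ultimately show False using fin finite_subset by blast
qed

lemma pr: "proper_IP_partition_regular UNIV pp"
  unfolding proper_IP_partition_regular_def
proof (intro allI impI)
  fix A P assume h: "proper_IP UNIV pp A \<and> finite P \<and> disjoint P \<and> \<Union>P = A"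
  then obtain b where inj: "inj b" and FSA: "FS pp b \<subseteq> A" unfolding proper_IP_def by blast
  have rA: "b n \<in> \<Union>P" for n using single_FS[of b n] FSA h by blast
  have "\<exists>K. infinite K \<and> (\<forall>i\<in>K. \<forall>j\<in>K. good (b i) (b j))"
  proof -
    let ?K1 = "{n. 0 \<in> b n}" and ?K2 = "{n. b n \<noteq> {} \<and> 0 \<notin> b n}" and ?K3 = "{n. b n = {}}"
    have "finite ?K3"
    proof (rule finite_subset)
      show "?K3 \<subseteq> {inv b {}}" using inj by (auto, metis inv_f_f)
    qed auto
    moreover have "UNIV = ?K1 \<union> ?K2 \<union> ?K3" by auto
    ultimately have "infinite ?K1 \<or> infinite ?K2"
      by (metis finite_Un infinite_UNIV_nat)
    then show ?thesis
    proof
      assume "infinite ?K1" then show ?thesis by (intro exI[of _ ?K1]) (auto simp: good_def)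
    next
      assume "infinite ?K2" then show ?thesis by (intro exI[of _ ?K2]) (auto simp: good_def)
    qed
  qed
  then obtain K where K: "infinite K" "\<forall>i\<in>K. \<forall>j\<in>K. good (b i) (b j)" by blast
  have Keq: "K = (\<Union>B\<in>P. {n\<in>K. b n \<in> B})" using rA by blast
  have "\<exists>B\<in>P. infinite {n\<in>K. b n \<in> B}" 
  proof (rule ccontr)
    assume "\<not> (\<exists>B\<in>P. infinite {n\<in>K. b n \<in> B})"
    then have "finite (\<Union>B\<in>P. {n\<in>K. b n \<in> B})" using h by auto
    then show False using K(1) Keq by simp
  qed
  then obtain B where B: "B \<in> P" "infinite {n\<in>K. b n \<in> B}" by blast
  define L where "L = {n\<in>K. b n \<in> B}"
  define c where "c = b \<circ> enumerate L"
  have Lin: "enumerate L n \<in> L" for n using B(2) L_def enumerate_in_set by blast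
  have "inj (enumerate L)" using strict_mono_enumerate[of L] B(2) L_def strict_mono_imp_inj_on by blast
  then have injc: "inj c" unfolding c_def using inj inj_compose by blast
  have gc: "good (c i) (c j)" for i j using Lin[of i] Lin[of j] K(2) by (auto simp: c_def L_def)
  have rc: "range c \<subseteq> B" using Lin by (auto simp: c_def L_def)
  have "FS pp c \<subseteq> range c" by (rule FS_sub) (rule gc)
  then have "FS pp c \<subseteq> B" using rc by (rule order_trans)
  then have "proper_IP UNIV pp B" unfolding proper_IP_def using injc by blast
  then show "\<exists>B\<in>P. proper_IP UNIV pp B" using B(1) by blast
qed

lemma infU: "infinite (UNIV :: nat set set)"
proof -
  have "infinite (range (\<lambda>n::nat. {n}))" by (rule range_inj_infinite) (auto simp: inj_def)
  then show ?thesis by (rule infinite_super[OF subset_UNIV])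
qed

theorem corollary4p1:
  shows "\<exists>(S :: nat set set) p. semigroup_on S p \<and> infinite S \<and> \<not> moving S p
           \<and> proper_IP_partition_regular S p"
  using pp_semi not_moving pr infU by blast
end
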